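(* Let $\tau,\nu$ be complex $n\times n$ matrices and $0\le\eta\le n$. Then, with all indices summed over $\{0,\dots,n-1\}$: 1. $\big\|\sum_{j,k,m}\tau_{j,k}\nu_{k,m}A_j^\dagger N_mA_k\big\|_\eta\le\|\tau\|\|\nu\|_{\max}\eta^2$; 2. $\big\|\sum_{j,k}\tau_{j,k}\nu_{k,k}A_j^\dagger A_k\big\|_\eta\le\|\tau\|\|\nu\|_{\max}\eta$; 3. $\big\|\sum_{j,k,l}\tau_{j,k}\nu_{l,k}A_j^\dagger N_lA_k\big\|_\eta\le\|\tau\|\|\nu\|_{\max}\eta^2$; 4. $\big\|\sum_{j,k,m}\tau_{j,k}\nu_{j,m}A_j^\dagger N_mA_k\big\|_\eta\le\|\tau\|\|\nu\|_{\max}\eta^2$; 5. $\big\|\sum_{j,k}\tau_{j,k}\nu_{j,j}A_j^\dagger A_k\big\|_\eta\le\|\tau\|\|\nu\|_{\max}\eta$; 6. $\big\|\sum_{j,k,l}\tau_{j,k}\nu_{l,j}A_j^\dagger N_l A_k\big\|_\eta\le\|\tau\|\|\nu\|_{\max}\eta^2$.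
   Context: Fermionic Fock space on $n$ spin orbitals: the $2^n$-dimensional Hilbert space with orthonormal basis $|c_0,\dots,c_{n-1}\rangle$, $c_j\in\{0,1\}$, with creation operators $A_j^\dagger|\dots,0_j,\dots\rangle=(-1)^{\sum_{k<j}c_k}|\dots,1_j,\dots\rangle$, $A_j^\dagger|\dots,1_j,\dots\rangle=0$, annihilation operators $A_j=(A_j^\dagger)^\dagger$, $N_j=A_j^\dagger A_j$, $N=\sum_jN_j$. The $\eta$-electron subspace is spanned by basis vectors with $\sum_jc_j=\eta$; $\eta$-electron states are unit vectors in it. For an operator $X$ commuting with $N$, $\|X\|_\eta=\max|\langle\phi_\eta|X|\psi_\eta\rangle|$ over $\eta$-electron states. $\|\tau\|$ is the spectral norm and $\|\nu\|_{\max}=\max_{l,m}|\nu_{l,m}|$. *)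

theory Defs
  imports Complex_Main
begin

text \<open>Fermionic Fock space on n spin orbitals. A basis vector |c_0,...,c_{n-1}\<rangle>
  is identified with its set of occupied orbitals S, a subset of {..<n}.
  Operators are represented by their matrices in this basis:
  X T S = \<langle>T|X|S\<rangle> for T, S subsets of {..<n}.\<close>

type_synonym fop = "nat set \<Rightarrow> nat set \<Rightarrow> complex"

definition fock_basis :: "nat \<Rightarrow> nat set set" where
  "fock_basis n = Pow {..<n}"

definition creation :: "nat \<Rightarrow> nat \<Rightarrow> fop" where
  "creation n j T S =
     (if S \<subseteq> {..<n} \<and> j < n \<and> j \<notin> S \<and> T = insert j S
      then (-1) ^ card {k \<in> S. k < j} else 0)"

definition annihilation :: "nat \<Rightarrow> nat \<Rightarrow> fop" where
  "annihilation n j T S = cnj (creation n j S T)"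

definition fmult :: "nat \<Rightarrow> fop \<Rightarrow> fop \<Rightarrow> fop" where
  "fmult n X Y T S = (\<Sum>R\<in>fock_basis n. X T R * Y R S)"

definition number_op :: "nat \<Rightarrow> nat \<Rightarrow> fop" where
  "number_op n j = fmult n (creation n j) (annihilation n j)"

definition eta_basis :: "nat \<Rightarrow> nat \<Rightarrow> nat set set" where
  "eta_basis n eta = {S \<in> fock_basis n. card S = eta}"

definition eta_state :: "nat \<Rightarrow> nat \<Rightarrow> (nat set \<Rightarrow> complex) \<Rightarrow> bool" where
  "eta_state n eta \<phi> \<longleftrightarrow>
     (\<forall>S. S \<notin> eta_basis n eta \<longrightarrow> \<phi> S = 0) \<and>
     (\<Sum>S\<in>eta_basis n eta. (cmod (\<phi> S))\<^sup>2) = 1"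

definition braket :: "nat \<Rightarrow> (nat set \<Rightarrow> complex) \<Rightarrow> fop \<Rightarrow> (nat set \<Rightarrow> complex) \<Rightarrow> complex" where
  "braket n \<phi> X \<psi> = (\<Sum>T\<in>fock_basis n. \<Sum>S\<in>fock_basis n. cnj (\<phi> T) * X T S * \<psi> S)"

definition eta_norm :: "nat \<Rightarrow> nat \<Rightarrow> fop \<Rightarrow> real" where
  "eta_norm n eta X =
     Sup {cmod (braket n \<phi> X \<psi>) | \<phi> \<psi>. eta_state n eta \<phi> \<and> eta_state n eta \<psi>}"

text \<open>n x n complex matrices are functions nat => nat => complex, indices in {..<n}.\<close>
definition vec_norm :: "nat \<Rightarrow> (nat \<Rightarrow> complex) \<Rightarrow> real" where
  "vec_norm n x = sqrt (\<Sum>i<n. (cmod (x i))\<^sup>2)"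

definition spectral_norm :: "nat \<Rightarrow> (nat \<Rightarrow> nat \<Rightarrow> complex) \<Rightarrow> real" where
  "spectral_norm n M =
     Sup {vec_norm n (\<lambda>i. \<Sum>k<n. M i k * x k) | x. vec_norm n x \<le> 1}"

text \<open>Max-entry norm (0 inserted only so that it is well defined when n = 0).\<close>
definition max_norm :: "nat \<Rightarrow> (nat \<Rightarrow> nat \<Rightarrow> complex) \<Rightarrow> real" where
  "max_norm n M = Max (insert 0 {cmod (M l m) | l m. l < n \<and> m < n})"

end

theory Submission
  imports Defs "HOL-Analysis.L2_Norm"
begin


lemma vn_L2: "vec_norm n x = L2_set (\<lambda>i. cmod (x i)) {..<n}"
  by (simp add: vec_norm_def L2_set_def)

lemma vn_scale: "vec_norm n (\<lambda>i. c * x i) = cmod c * vec_norm n x"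
  unfolding vn_L2 norm_mult by (simp add: L2_set_right_distrib)

lemma spec_bdd: "bdd_above {vec_norm n (\<lambda>i. \<Sum>k<n. M i k * x k) | x. vec_norm n x \<le> 1}"
proof -
  let ?B = "sqrt (\<Sum>i<n. (\<Sum>k<n. cmod (M i k))\<^sup>2)"
  have "vec_norm n (\<lambda>i. \<Sum>k<n. M i k * x k) \<le> ?B" if "vec_norm n x \<le> 1" for x
  proof -
    have xk: "cmod (x k) \<le> 1" if "k < n" for k
    proof -
      have "cmod (x k) \<le> vec_norm n x" unfolding vn_L2
        by (rule member_le_L2_set) (use that in auto)
      with \<open>vec_norm n x \<le> 1\<close> show ?thesis by simp
    qed
    have "cmod (\<Sum>k<n. M i k * x k) \<le> (\<Sum>k<n. cmod (M i k))" for i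
    proof -
      have "cmod (\<Sum>k<n. M i k * x k) \<le> (\<Sum>k<n. cmod (M i k * x k))" by (rule norm_sum)
      also have "\<dots> \<le> (\<Sum>k<n. cmod (M i k))"
        by (rule sum_mono) (use xk in \<open>auto simp: norm_mult intro: mult_left_le\<close>)
      finally show ?thesis .
    qed
    then show ?thesis unfolding vec_norm_def
      by (intro real_sqrt_le_mono sum_mono power_mono) auto
  qed
  then show ?thesis by (auto simp: bdd_above_def)
qed

lemma spec_nonneg: "0 \<le> spectral_norm n M"
proof -
  have "vec_norm n (\<lambda>i. \<Sum>k<n. M i k * (\<lambda>_. 0) k) \<in> {vec_norm n (\<lambda>i. \<Sum>k<n. M i k * x k) | x. vec_norm n x \<le> 1}"
    by (auto simp: vec_norm_def intro!: exI[of _ "\<lambda>_. 0"])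
  then have "vec_norm n (\<lambda>i. \<Sum>k<n. M i k * (\<lambda>_. 0) k) \<le> spectral_norm n M"
    unfolding spectral_norm_def by (rule cSup_upper[OF _ spec_bdd])
  moreover have "vec_norm n (\<lambda>i. \<Sum>k<n. M i k * (\<lambda>_. 0) k) = 0" by (simp add: vec_norm_def)
  ultimately show ?thesis by simp
qed

lemma spec_bound: "vec_norm n (\<lambda>i. \<Sum>k<n. M i k * y k) \<le> spectral_norm n M * vec_norm n y"
proof (cases "vec_norm n y = 0")
  case True
  then have "\<forall>k\<in>{..<n}. cmod (y k) = 0" unfolding vn_L2 by (simp add: L2_set_eq_0_iff)
  then have "vec_norm n (\<lambda>i. \<Sum>k<n. M i k * y k) = 0" by (simp add: vec_norm_def)
  then show ?thesis using True by simp
next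
  case False
  define v where "v = vec_norm n y"
  have "v \<ge> 0" by (simp add: v_def vn_L2)
  then have vpos: "v > 0" using False by (simp add: v_def)
  define y' where "y' = (\<lambda>k. complex_of_real (1/v) * y k)"
  have "vec_norm n y' = 1" unfolding y'_def vn_scale using vpos by (simp add: v_def norm_divide)
  then have "vec_norm n (\<lambda>i. \<Sum>k<n. M i k * y' k) \<in> {vec_norm n (\<lambda>i. \<Sum>k<n. M i k * x k) | x. vec_norm n x \<le> 1}"
    by auto
  then have "vec_norm n (\<lambda>i. \<Sum>k<n. M i k * y' k) \<le> spectral_norm n M"
    unfolding spectral_norm_def by (rule cSup_upper[OF _ spec_bdd])
  moreover have "(\<lambda>i. \<Sum>k<n. M i k * y' k) = (\<lambda>i. complex_of_real (1/v) * (\<Sum>k<n. M i k * y k))"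
    by (simp add: y'_def sum_distrib_left mult_ac)
  ultimately have "cmod (complex_of_real (1/v)) * vec_norm n (\<lambda>i. \<Sum>k<n. M i k * y k) \<le> spectral_norm n M"
    by (simp only: vn_scale)
  then have "(1/v) * vec_norm n (\<lambda>i. \<Sum>k<n. M i k * y k) \<le> spectral_norm n M"
    using vpos by (simp add: norm_divide)
  then show ?thesis using vpos by (simp add: v_def field_simps)
qed

lemma bilin_bound:
  "cmod (\<Sum>j<n. \<Sum>k<n. cnj (x j) * M j k * y k) \<le> spectral_norm n M * vec_norm n x * vec_norm n y"
proof -
  define w where "w = (\<lambda>i. \<Sum>k<n. M i k * y k)"
  have "(\<Sum>j<n. \<Sum>k<n. cnj (x j) * M j k * y k) = (\<Sum>j<n. cnj (x j) * w j)"
    by (simp add: w_def sum_distrib_left mult_ac)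
  then have "cmod (\<Sum>j<n. \<Sum>k<n. cnj (x j) * M j k * y k) \<le> (\<Sum>j<n. cmod (x j) * cmod (w j))"
    by (metis (no_types, lifting) complex_mod_cnj norm_mult norm_sum sum.cong)
  also have "\<dots> \<le> vec_norm n x * vec_norm n w"
    using L2_set_mult_ineq[of "\<lambda>j. cmod (x j)" "\<lambda>j. cmod (w j)" "{..<n}"] by (simp add: vn_L2)
  also have "\<dots> \<le> vec_norm n x * (spectral_norm n M * vec_norm n y)"
    unfolding w_def by (intro mult_left_mono spec_bound) (simp add: vn_L2)
  finally show ?thesis by (simp add: mult_ac)
qed




lemma vn_mono:
  assumes "C \<ge> 0" "\<And>j. j < n \<Longrightarrow> cmod (x' j) \<le> C * cmod (x j)"
  shows "vec_norm n x' \<le> C * vec_norm n x"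
  unfolding vn_L2 using assms
  by (simp add: L2_set_right_distrib) (rule L2_set_mono, auto)

lemma vn_sq: "(vec_norm n x)\<^sup>2 = (\<Sum>j<n. (cmod (x j))\<^sup>2)"
  by (simp add: vec_norm_def sum_nonneg)

lemma G:
  fixes x x' y y' :: "'a \<Rightarrow> nat \<Rightarrow> complex"
  assumes "finite Q" "C1 \<ge> 0" "C2 \<ge> 0"
    "\<And>R j. R \<in> Q \<Longrightarrow> j < n \<Longrightarrow> cmod (x' R j) \<le> C1 * cmod (x R j)"
    "\<And>R k. R \<in> Q \<Longrightarrow> k < n \<Longrightarrow> cmod (y' R k) \<le> C2 * cmod (y R k)"
  shows "cmod (\<Sum>R\<in>Q. \<Sum>j<n. \<Sum>k<n. cnj (x' R j) * M j k * y' R k)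
    \<le> spectral_norm n M * C1 * C2 * sqrt (\<Sum>R\<in>Q. \<Sum>j<n. (cmod (x R j))\<^sup>2)
        * sqrt (\<Sum>R\<in>Q. \<Sum>k<n. (cmod (y R k))\<^sup>2)"
proof -
  have sp: "spectral_norm n M \<ge> 0" by (rule spec_nonneg)
  have "cmod (\<Sum>R\<in>Q. \<Sum>j<n. \<Sum>k<n. cnj (x' R j) * M j k * y' R k)
      \<le> (\<Sum>R\<in>Q. cmod (\<Sum>j<n. \<Sum>k<n. cnj (x' R j) * M j k * y' R k))" by (rule norm_sum)
  also have "\<dots> \<le> (\<Sum>R\<in>Q. spectral_norm n M * vec_norm n (x' R) * vec_norm n (y' R))"
    by (rule sum_mono) (rule bilin_bound)
  also have "\<dots> \<le> (\<Sum>R\<in>Q. spectral_norm n M * (C1 * vec_norm n (x R)) * (C2 * vec_norm n (y R)))"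
  proof (rule sum_mono)
    fix R assume R: "R \<in> Q"
    have 1: "vec_norm n (x' R) \<le> C1 * vec_norm n (x R)" by (rule vn_mono) (use assms R in auto)
    have 2: "vec_norm n (y' R) \<le> C2 * vec_norm n (y R)" by (rule vn_mono) (use assms R in auto)
    show "spectral_norm n M * vec_norm n (x' R) * vec_norm n (y' R)
        \<le> spectral_norm n M * (C1 * vec_norm n (x R)) * (C2 * vec_norm n (y R))"
      using 1 2 sp assms(2) by (intro mult_mono) (auto simp: vn_L2)
  qed
  also have "\<dots> = spectral_norm n M * C1 * C2 * (\<Sum>R\<in>Q. \<bar>vec_norm n (x R)\<bar> * \<bar>vec_norm n (y R)\<bar>)"
    by (simp add: sum_distrib_left mult_ac vn_L2)
  also have "\<dots> \<le> spectral_norm n M * C1 * C2 * (L2_set (\<lambda>R. vec_norm n (x R)) Q * L2_set (\<lambda>R. vec_norm n (y R)) Q)"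
    using sp assms by (intro mult_left_mono L2_set_mult_ineq) auto
  also have "L2_set (\<lambda>R. vec_norm n (x R)) Q = sqrt (\<Sum>R\<in>Q. \<Sum>j<n. (cmod (x R j))\<^sup>2)"
    by (simp add: L2_set_def vn_sq)
  also have "L2_set (\<lambda>R. vec_norm n (y R)) Q = sqrt (\<Sum>R\<in>Q. \<Sum>k<n. (cmod (y R k))\<^sup>2)"
    by (simp add: L2_set_def vn_sq)
  finally show ?thesis by (simp add: mult_ac)
qed




lemma swap4: "(\<Sum>a\<in>A. \<Sum>b\<in>B. \<Sum>c\<in>C. \<Sum>d\<in>D. f a b c d) = (\<Sum>d\<in>D. \<Sum>c\<in>C. \<Sum>a\<in>A. \<Sum>b\<in>B. (f a b c d::'z::comm_monoid_add))"
proof -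
  have "(\<Sum>a\<in>A. \<Sum>b\<in>B. \<Sum>c\<in>C. \<Sum>d\<in>D. f a b c d) = (\<Sum>a\<in>A. \<Sum>b\<in>B. \<Sum>d\<in>D. \<Sum>c\<in>C. f a b c d)"
    by (rule sum.cong[OF refl], rule sum.cong[OF refl], rule sum.swap)
  also have "\<dots> = (\<Sum>a\<in>A. \<Sum>d\<in>D. \<Sum>b\<in>B. \<Sum>c\<in>C. f a b c d)"
    by (rule sum.cong[OF refl], rule sum.swap)
  also have "\<dots> = (\<Sum>d\<in>D. \<Sum>a\<in>A. \<Sum>b\<in>B. \<Sum>c\<in>C. f a b c d)"
    by (rule sum.swap)
  also have "\<dots> = (\<Sum>d\<in>D. \<Sum>a\<in>A. \<Sum>c\<in>C. \<Sum>b\<in>B. f a b c d)"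
    by (rule sum.cong[OF refl], rule sum.cong[OF refl], rule sum.swap)
  also have "\<dots> = (\<Sum>d\<in>D. \<Sum>c\<in>C. \<Sum>a\<in>A. \<Sum>b\<in>B. f a b c d)"
    by (rule sum.cong[OF refl], rule sum.swap)
  finally show ?thesis .
qed

lemma swap3: "(\<Sum>a\<in>A. \<Sum>b\<in>B. \<Sum>c\<in>C. f a b c) = (\<Sum>c\<in>C. \<Sum>a\<in>A. \<Sum>b\<in>B. (f a b c::'z::comm_monoid_add))"
proof -
  have "(\<Sum>a\<in>A. \<Sum>b\<in>B. \<Sum>c\<in>C. f a b c) = (\<Sum>a\<in>A. \<Sum>c\<in>C. \<Sum>b\<in>B. f a b c)"
    by (rule sum.cong[OF refl], rule sum.swap)
  also have "\<dots> = (\<Sum>c\<in>C. \<Sum>a\<in>A. \<Sum>b\<in>B. f a b c)"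
    by (rule sum.swap)
  finally show ?thesis .
qed

definition av :: "nat \<Rightarrow> nat \<Rightarrow> (nat set \<Rightarrow> complex) \<Rightarrow> nat set \<Rightarrow> complex" where
  "av n k \<psi> R = (\<Sum>T\<in>fock_basis n. annihilation n k R T * \<psi> T)"

definition ind :: "nat set \<Rightarrow> nat \<Rightarrow> complex" where
  "ind R m = (if m \<in> R then 1 else 0)"

lemma finite_P[simp]: "finite (fock_basis n)"
  by (simp add: fock_basis_def)

lemma braket_sum: "braket n \<phi> (\<lambda>T S. \<Sum>i\<in>I. F i T S) \<psi> = (\<Sum>i\<in>I. braket n \<phi> (F i) \<psi>)"
proof -
  have "braket n \<phi> (\<lambda>T S. \<Sum>i\<in>I. F i T S) \<psi> =
     (\<Sum>T\<in>fock_basis n. \<Sum>S\<in>fock_basis n. \<Sum>i\<in>I. cnj (\<phi> T) * F i T S * \<psi> S)"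
    unfolding braket_def by (simp add: sum_distrib_left sum_distrib_right)
  also have "\<dots> = (\<Sum>i\<in>I. braket n \<phi> (F i) \<psi>)"
    unfolding braket_def by (rule swap3)
  finally show ?thesis .
qed

lemma braket_scale: "braket n \<phi> (\<lambda>T S. c * F T S) \<psi> = c * braket n \<phi> F \<psi>"
  unfolding braket_def by (simp add: sum_distrib_left mult_ac)

lemma braket_2: "braket n \<phi> (fmult n X Y) \<psi> =
  (\<Sum>R\<in>fock_basis n. cnj (\<Sum>T\<in>fock_basis n. cnj (X T R) * \<phi> T) * (\<Sum>S\<in>fock_basis n. Y R S * \<psi> S))"
proof -
  let ?P = "fock_basis n"
  have "braket n \<phi> (fmult n X Y) \<psi> = (\<Sum>T\<in>?P. \<Sum>S\<in>?P. \<Sum>R\<in>?P. cnj (\<phi> T) * X T R * Y R S * \<psi> S)"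
    unfolding braket_def fmult_def by (simp add: sum_distrib_left sum_distrib_right mult_ac)
  also have "\<dots> = (\<Sum>R\<in>?P. \<Sum>T\<in>?P. \<Sum>S\<in>?P. cnj (\<phi> T) * X T R * Y R S * \<psi> S)"
    by (rule swap3)
  also have "\<dots> = (\<Sum>R\<in>?P. cnj (\<Sum>T\<in>?P. cnj (X T R) * \<phi> T) * (\<Sum>S\<in>?P. Y R S * \<psi> S))"
    by (simp add: sum_distrib_left sum_distrib_right mult_ac)
  finally show ?thesis .
qed

lemma braket_3: "braket n \<phi> (fmult n (fmult n X D) Y) \<psi> =
  (\<Sum>R\<in>fock_basis n. \<Sum>R'\<in>fock_basis n. cnj (\<Sum>T\<in>fock_basis n. cnj (X T R) * \<phi> T) * D R R' * (\<Sum>S\<in>fock_basis n. Y R' S * \<psi> S))"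
proof -
  let ?P = "fock_basis n"
  have "braket n \<phi> (fmult n (fmult n X D) Y) \<psi> = (\<Sum>T\<in>?P. \<Sum>S\<in>?P. \<Sum>R'\<in>?P. \<Sum>R\<in>?P. cnj (\<phi> T) * X T R * D R R' * Y R' S * \<psi> S)"
    unfolding braket_def fmult_def by (simp add: sum_distrib_left sum_distrib_right mult_ac)
  also have "\<dots> = (\<Sum>R\<in>?P. \<Sum>R'\<in>?P. \<Sum>T\<in>?P. \<Sum>S\<in>?P. cnj (\<phi> T) * X T R * D R R' * Y R' S * \<psi> S)"
    by (rule swap4)
  also have "\<dots> = (\<Sum>R\<in>?P. \<Sum>R'\<in>?P. cnj (\<Sum>T\<in>?P. cnj (X T R) * \<phi> T) * D R R' * (\<Sum>S\<in>?P. Y R' S * \<psi> S))"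
    by (simp add: sum_distrib_left sum_distrib_right mult_ac)
  finally show ?thesis .
qed

lemma sign_sq: "((-1::complex) ^ c) * (-1) ^ c = 1"
  by (simp add: power_mult_distrib[symmetric])

lemma ann_eq: "annihilation n k R T =
  (if R \<subseteq> {..<n} \<and> k < n \<and> k \<notin> R \<and> T = insert k R then (-1) ^ card {q \<in> R. q < k} else 0)"
  by (simp add: annihilation_def creation_def)

lemma number_op_eq:
  assumes "R \<in> fock_basis n" "R' \<in> fock_basis n"
  shows "number_op n m R R' = (if R' = R \<and> m \<in> R then 1 else 0)"
proof -
  let ?P = "fock_basis n"
  have "number_op n m R R' = (\<Sum>Q\<in>?P. if Q = R - {m} then (if R' = R \<and> m \<in> R then 1 else 0) else 0)"
    unfolding number_op_def fmult_def
  proof (rule sum.cong[OF refl])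
    fix Q assume Q: "Q \<in> ?P"
    show "creation n m R Q * annihilation n m Q R' = (if Q = R - {m} then (if R' = R \<and> m \<in> R then 1 else 0) else 0)"
      using assms Q unfolding ann_eq creation_def fock_basis_def
      by (auto simp: sign_sq insert_Diff)
  qed
  also have "\<dots> = (if R' = R \<and> m \<in> R then 1 else 0)"
    using assms by (auto simp: fock_basis_def)
  finally show ?thesis .
qed

lemma braket_CA: "braket n \<phi> (fmult n (creation n j) (annihilation n k)) \<psi> =
  (\<Sum>R\<in>fock_basis n. cnj (av n j \<phi> R) * av n k \<psi> R)"
  unfolding braket_2 av_def annihilation_def by simp

lemma braket_CNA: "braket n \<phi> (fmult n (fmult n (creation n j) (number_op n m)) (annihilation n k)) \<psi> =
  (\<Sum>R\<in>fock_basis n. cnj (av n j \<phi> R) * ind R m * av n k \<psi> R)"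
proof -
  let ?P = "fock_basis n"
  have "braket n \<phi> (fmult n (fmult n (creation n j) (number_op n m)) (annihilation n k)) \<psi> =
     (\<Sum>R\<in>?P. \<Sum>R'\<in>?P. cnj (av n j \<phi> R) * number_op n m R R' * av n k \<psi> R')"
    unfolding braket_3 av_def annihilation_def by simp
  also have "\<dots> = (\<Sum>R\<in>?P. cnj (av n j \<phi> R) * ind R m * av n k \<psi> R)"
  proof (rule sum.cong[OF refl])
    fix R assume R: "R \<in> ?P"
    have "(\<Sum>R'\<in>?P. cnj (av n j \<phi> R) * number_op n m R R' * av n k \<psi> R') =
      (\<Sum>R'\<in>?P. if R' = R then cnj (av n j \<phi> R) * ind R m * av n k \<psi> R else 0)"
      by (rule sum.cong[OF refl]) (use R in \<open>auto simp: number_op_eq ind_def\<close>)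
    also have "\<dots> = cnj (av n j \<phi> R) * ind R m * av n k \<psi> R" using R by simp
    finally show "(\<Sum>R'\<in>?P. cnj (av n j \<phi> R) * number_op n m R R' * av n k \<psi> R') =
      cnj (av n j \<phi> R) * ind R m * av n k \<psi> R" .
  qed
  finally show ?thesis .
qed




lemma av_eq:
  assumes "R \<in> fock_basis n" "k < n"
  shows "av n k \<psi> R = (if k \<in> R then 0 else (-1) ^ card {q \<in> R. q < k} * \<psi> (insert k R))"
proof (cases "k \<in> R")
  case True
  then show ?thesis by (simp add: av_def ann_eq)
next
  case False
  have "av n k \<psi> R = (\<Sum>T\<in>fock_basis n. if T = insert k R then (-1) ^ card {q \<in> R. q < k} * \<psi> (insert k R) else 0)"
    unfolding av_def by (rule sum.cong[OF refl]) (use assms False in \<open>auto simp: ann_eq fock_basis_def\<close>)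
  also have "\<dots> = (-1) ^ card {q \<in> R. q < k} * \<psi> (insert k R)"
    using assms by (simp add: fock_basis_def)
  finally show ?thesis using False by simp
qed

lemma av_sq: "(\<Sum>R\<in>fock_basis n. \<Sum>k<n. (cmod (av n k \<psi> R))\<^sup>2) =
  (\<Sum>S\<in>fock_basis n. real (card S) * (cmod (\<psi> S))\<^sup>2)"
proof -
  let ?P = "fock_basis n"
  define g where "g S = (cmod (\<psi> S))\<^sup>2" for S
  have "(\<Sum>R\<in>?P. \<Sum>k<n. (cmod (av n k \<psi> R))\<^sup>2) = (\<Sum>R\<in>?P. \<Sum>k<n. if k \<notin> R then g (insert k R) else 0)"
    by (intro sum.cong refl) (auto simp: av_eq g_def norm_mult norm_power)
  also have "\<dots> = (\<Sum>k<n. \<Sum>R\<in>?P. if k \<notin> R then g (insert k R) else 0)"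
    by (rule sum.swap)
  also have "\<dots> = (\<Sum>k<n. \<Sum>S\<in>?P. if k \<in> S then g S else 0)"
  proof (rule sum.cong[OF refl])
    fix k assume k: "k \<in> {..<n}"
    have bij: "bij_betw (insert k) {R \<in> ?P. k \<notin> R} {S \<in> ?P. k \<in> S}"
      unfolding bij_betw_def
    proof
      show "inj_on (insert k) {R \<in> ?P. k \<notin> R}"
        by (auto simp: inj_on_def)
      show "insert k ` {R \<in> ?P. k \<notin> R} = {S \<in> ?P. k \<in> S}"
      proof
        show "insert k ` {R \<in> ?P. k \<notin> R} \<subseteq> {S \<in> ?P. k \<in> S}" using k by (auto simp: fock_basis_def)
        show "{S \<in> ?P. k \<in> S} \<subseteq> insert k ` {R \<in> ?P. k \<notin> R}"
        proof
          fix S assume S: "S \<in> {S \<in> ?P. k \<in> S}"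
          show "S \<in> insert k ` {R \<in> ?P. k \<notin> R}"
            by (rule image_eqI[of _ _ "S - {k}"]) (use S in \<open>auto simp: fock_basis_def\<close>)
        qed
      qed
    qed
    have "(\<Sum>R\<in>?P. if k \<notin> R then g (insert k R) else 0) = (\<Sum>R\<in>{R \<in> ?P. k \<notin> R}. g (insert k R))"
      by (simp add: sum.inter_filter)
    also have "\<dots> = (\<Sum>S\<in>{S \<in> ?P. k \<in> S}. g S)"
      by (rule sum.reindex_bij_betw[OF bij])
    also have "\<dots> = (\<Sum>S\<in>?P. if k \<in> S then g S else 0)"
      by (simp add: sum.inter_filter)
    finally show "(\<Sum>R\<in>?P. if k \<notin> R then g (insert k R) else 0) = (\<Sum>S\<in>?P. if k \<in> S then g S else 0)" .
  qed
  also have "\<dots> = (\<Sum>S\<in>?P. \<Sum>k<n. if k \<in> S then g S else 0)"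
    by (rule sum.swap)
  also have "\<dots> = (\<Sum>S\<in>?P. real (card S) * g S)"
  proof (rule sum.cong[OF refl])
    fix S assume S: "S \<in> ?P"
    have "(\<Sum>k<n. if k \<in> S then g S else 0) = (\<Sum>k\<in>{k\<in>{..<n}. k \<in> S}. g S)"
      by (rule sum.inter_filter[symmetric]) simp
    also have "{k\<in>{..<n}. k \<in> S} = S" using S by (auto simp: fock_basis_def)
    finally show "(\<Sum>k<n. if k \<in> S then g S else 0) = real (card S) * g S" by simp
  qed
  finally show ?thesis by (simp add: g_def)
qed

lemma eta_sum:
  assumes "eta_state n eta \<psi>"
  shows "(\<Sum>S\<in>fock_basis n. real (card S) * (cmod (\<psi> S))\<^sup>2) = real eta"
proof -
  let ?P = "fock_basis n"
  have z: "\<And>S. S \<notin> eta_basis n eta \<Longrightarrow> \<psi> S = 0" and one: "(\<Sum>S\<in>eta_basis n eta. (cmod (\<psi> S))\<^sup>2) = 1"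
    using assms by (auto simp: eta_state_def)
  have sub: "eta_basis n eta \<subseteq> ?P" by (auto simp: eta_basis_def)
  have "(\<Sum>S\<in>?P. real (card S) * (cmod (\<psi> S))\<^sup>2) = (\<Sum>S\<in>?P. real eta * (cmod (\<psi> S))\<^sup>2)"
    by (rule sum.cong[OF refl]) (metis (mono_tags, lifting) eta_basis_def mem_Collect_eq mult_eq_0_iff norm_zero power_zero_numeral z)
  also have "\<dots> = real eta * (\<Sum>S\<in>?P. (cmod (\<psi> S))\<^sup>2)" by (simp add: sum_distrib_left)
  also have "(\<Sum>S\<in>?P. (cmod (\<psi> S))\<^sup>2) = (\<Sum>S\<in>eta_basis n eta. (cmod (\<psi> S))\<^sup>2)"
    by (rule sum.mono_neutral_right) (use sub z in auto)
  finally show ?thesis using one by simp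
qed

lemma av_nz:
  assumes "eta_state n eta \<psi>" "R \<in> fock_basis n" "k < n" "av n k \<psi> R \<noteq> 0"
  shows "card R + 1 = eta"
proof -
  have kR: "k \<notin> R" and nz: "\<psi> (insert k R) \<noteq> 0" using assms(2-4) by (auto simp: av_eq split: if_splits)
  then have "insert k R \<in> eta_basis n eta" using assms(1) by (auto simp: eta_state_def)
  then have "card (insert k R) = eta" by (simp add: eta_basis_def)
  moreover have "finite R" using assms(2) by (auto simp: fock_basis_def intro: finite_subset)
  ultimately show ?thesis using kR by simp
qed

lemma ind_bound:
  assumes "R \<in> fock_basis n" "\<And>m. m < n \<Longrightarrow> cmod (a m) \<le> M"
  shows "cmod (\<Sum>m<n. a m * ind R m) \<le> M * real (card R)"
proof -
  have "cmod (\<Sum>m<n. a m * ind R m) \<le> (\<Sum>m<n. cmod (a m * ind R m))" by (rule norm_sum)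
  also have "\<dots> \<le> (\<Sum>m<n. if m \<in> R then M else 0)"
    by (rule sum_mono) (use assms(2) in \<open>auto simp: ind_def\<close>)
  also have "\<dots> = (\<Sum>m\<in>{m\<in>{..<n}. m \<in> R}. M)" by (rule sum.inter_filter[symmetric]) simp
  also have "{m\<in>{..<n}. m \<in> R} = R" using assms(1) by (auto simp: fock_basis_def)
  finally show ?thesis by (simp add: mult_ac)
qed

lemma max_norm_ge: "l < n \<Longrightarrow> m < n \<Longrightarrow> cmod (\<nu> l m) \<le> max_norm n \<nu>"
  unfolding max_norm_def
  by (rule Max_ge) (auto intro: finite_image_set2)

lemma max_norm_nonneg: "0 \<le> max_norm n \<nu>"
  unfolding max_norm_def
  by (rule Max_ge) (auto intro: finite_image_set2)

lemma eta_state_ex: assumes "eta \<le> n" shows "eta_state n eta (\<lambda>S. if S = {..<eta} then 1 else 0)"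
proof -
  have mem: "{..<eta} \<in> eta_basis n eta" using assms by (auto simp: eta_basis_def fock_basis_def)
  have fin: "finite (eta_basis n eta)" by (simp add: eta_basis_def)
  have "(\<Sum>S\<in>eta_basis n eta. (cmod (if S = {..<eta} then 1 else 0))\<^sup>2) = (\<Sum>S\<in>eta_basis n eta. if S = {..<eta} then 1 else 0)"
    by (rule sum.cong) auto
  also have "\<dots> = 1" using mem fin by simp
  finally show ?thesis using mem unfolding eta_state_def by auto
qed




lemma rearr4: "(\<Sum>j\<in>A. \<Sum>k\<in>B. \<Sum>m\<in>C. f j k m * (\<Sum>R\<in>Q. g j k m R)) =
  (\<Sum>R\<in>Q. \<Sum>j\<in>A. \<Sum>k\<in>B. \<Sum>m\<in>C. (f j k m * g j k m R :: complex))"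
proof -
  have "(\<Sum>j\<in>A. \<Sum>k\<in>B. \<Sum>m\<in>C. f j k m * (\<Sum>R\<in>Q. g j k m R)) =
    (\<Sum>j\<in>A. \<Sum>k\<in>B. \<Sum>m\<in>C. \<Sum>R\<in>Q. f j k m * g j k m R)"
    by (simp add: sum_distrib_left)
  also have "\<dots> = (\<Sum>j\<in>A. \<Sum>k\<in>B. \<Sum>R\<in>Q. \<Sum>m\<in>C. f j k m * g j k m R)"
    by (rule sum.cong[OF refl], rule sum.cong[OF refl], rule sum.swap)
  also have "\<dots> = (\<Sum>j\<in>A. \<Sum>R\<in>Q. \<Sum>k\<in>B. \<Sum>m\<in>C. f j k m * g j k m R)"
    by (rule sum.cong[OF refl], rule sum.swap)
  also have "\<dots> = (\<Sum>R\<in>Q. \<Sum>j\<in>A. \<Sum>k\<in>B. \<Sum>m\<in>C. f j k m * g j k m R)"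
    by (rule sum.swap)
  finally show ?thesis .
qed

lemma rearr3: "(\<Sum>j\<in>A. \<Sum>k\<in>B. f j k * (\<Sum>R\<in>Q. g j k R)) =
  (\<Sum>R\<in>Q. \<Sum>j\<in>A. \<Sum>k\<in>B. (f j k * g j k R :: complex))"
proof -
  have "(\<Sum>j\<in>A. \<Sum>k\<in>B. f j k * (\<Sum>R\<in>Q. g j k R)) = (\<Sum>j\<in>A. \<Sum>k\<in>B. \<Sum>R\<in>Q. f j k * g j k R)"
    by (simp add: sum_distrib_left)
  also have "\<dots> = (\<Sum>R\<in>Q. \<Sum>j\<in>A. \<Sum>k\<in>B. f j k * g j k R)" by (rule swap3)
  finally show ?thesis .
qed

lemma eta_norm_le:
  assumes "eta \<le> n"
    "\<And>\<phi> \<psi>. eta_state n eta \<phi> \<Longrightarrow> eta_state n eta \<psi> \<Longrightarrow> cmod (braket n \<phi> X \<psi>) \<le> B"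
  shows "eta_norm n eta X \<le> B"
  unfolding eta_norm_def
proof (rule cSup_least)
  show "{cmod (braket n \<phi> X \<psi>) |\<phi> \<psi>. eta_state n eta \<phi> \<and> eta_state n eta \<psi>} \<noteq> {}"
    using eta_state_ex[OF assms(1)] by blast
qed (use assms(2) in auto)

lemma finish:
  assumes "eta_state n eta \<phi>" "eta_state n eta \<psi>" "C1 \<ge> 0" "C2 \<ge> 0"
    "\<And>R j. R \<in> fock_basis n \<Longrightarrow> j < n \<Longrightarrow> cmod (x' R j) \<le> C1 * cmod (av n j \<phi> R)"
    "\<And>R k. R \<in> fock_basis n \<Longrightarrow> k < n \<Longrightarrow> cmod (y' R k) \<le> C2 * cmod (av n k \<psi> R)"
  shows "cmod (\<Sum>R\<in>fock_basis n. \<Sum>j<n. \<Sum>k<n. cnj (x' R j) * \<tau> j k * y' R k)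
    \<le> spectral_norm n \<tau> * C1 * C2 * real eta"
proof -
  have "cmod (\<Sum>R\<in>fock_basis n. \<Sum>j<n. \<Sum>k<n. cnj (x' R j) * \<tau> j k * y' R k)
    \<le> spectral_norm n \<tau> * C1 * C2 * sqrt (\<Sum>R\<in>fock_basis n. \<Sum>j<n. (cmod (av n j \<phi> R))\<^sup>2)
        * sqrt (\<Sum>R\<in>fock_basis n. \<Sum>k<n. (cmod (av n k \<psi> R))\<^sup>2)"
    by (rule G[where x = "\<lambda>R j. av n j \<phi> R" and y = "\<lambda>R k. av n k \<psi> R"]) (use assms in auto)
  also have "\<dots> = spectral_norm n \<tau> * C1 * C2 * real eta"
    by (simp add: av_sq eta_sum[OF assms(1)] eta_sum[OF assms(2)])
  finally show ?thesis .
qed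

lemma cbound:
  assumes "eta_state n eta \<psi>" "R \<in> fock_basis n" "k < n" "\<And>m. m < n \<Longrightarrow> cmod (a m) \<le> M"
  shows "cmod (\<Sum>m<n. a m * ind R m) * cmod (av n k \<psi> R) \<le> M * real eta * cmod (av n k \<psi> R)"
proof (cases "av n k \<psi> R = 0")
  case True then show ?thesis by simp
next
  case False
  then have "card R + 1 = eta" using av_nz assms by blast
  then have c: "real (card R) \<le> real eta" by simp
  have M0: "M \<ge> 0" using assms(3,4) norm_ge_zero order_trans by blast
  have "cmod (\<Sum>m<n. a m * ind R m) \<le> M * real (card R)" by (rule ind_bound) (use assms in auto)
  also have "\<dots> \<le> M * real eta" using c M0 by (rule mult_left_mono)
  finally show ?thesis by (rule mult_right_mono) simp
qed




lemma item1:
  assumes "eta \<le> n"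
  shows "eta_norm n eta (\<lambda>T S. \<Sum>j<n. \<Sum>k<n. \<Sum>m<n. \<tau> j k * \<nu> k m *
       fmult n (fmult n (creation n j) (number_op n m)) (annihilation n k) T S)
     \<le> spectral_norm n \<tau> * max_norm n \<nu> * (real eta)\<^sup>2"
proof (rule eta_norm_le[OF assms])
  fix \<phi> \<psi> assume \<phi>: "eta_state n eta \<phi>" and \<psi>: "eta_state n eta \<psi>"
  let ?P = "fock_basis n"
  have "braket n \<phi> (\<lambda>T S. \<Sum>j<n. \<Sum>k<n. \<Sum>m<n. \<tau> j k * \<nu> k m *
       fmult n (fmult n (creation n j) (number_op n m)) (annihilation n k) T S) \<psi>
    = (\<Sum>j<n. \<Sum>k<n. \<Sum>m<n. \<tau> j k * \<nu> k m * (\<Sum>R\<in>?P. cnj (av n j \<phi> R) * ind R m * av n k \<psi> R))"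
    by (simp only: braket_sum braket_scale braket_CNA)
  also have "\<dots> = (\<Sum>R\<in>?P. \<Sum>j<n. \<Sum>k<n. \<Sum>m<n. \<tau> j k * \<nu> k m * (cnj (av n j \<phi> R) * ind R m * av n k \<psi> R))"
    by (rule rearr4)
  also have "\<dots> = (\<Sum>R\<in>?P. \<Sum>j<n. \<Sum>k<n. cnj (av n j \<phi> R) * \<tau> j k * ((\<Sum>m<n. \<nu> k m * ind R m) * av n k \<psi> R))"
    by (simp add: sum_distrib_left sum_distrib_right mult_ac)
  finally have eq: "braket n \<phi> (\<lambda>T S. \<Sum>j<n. \<Sum>k<n. \<Sum>m<n. \<tau> j k * \<nu> k m *
       fmult n (fmult n (creation n j) (number_op n m)) (annihilation n k) T S) \<psi> = \<dots>" .
  have "cmod (\<Sum>R\<in>?P. \<Sum>j<n. \<Sum>k<n. cnj (av n j \<phi> R) * \<tau> j k * ((\<Sum>m<n. \<nu> k m * ind R m) * av n k \<psi> R))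
     \<le> spectral_norm n \<tau> * 1 * (max_norm n \<nu> * real eta) * real eta"
  proof (rule finish[OF \<phi> \<psi>])
    show "0 \<le> max_norm n \<nu> * real eta" by (simp add: max_norm_nonneg)
    fix R k assume "R \<in> ?P" "k < n"
    then show "cmod ((\<Sum>m<n. \<nu> k m * ind R m) * av n k \<psi> R) \<le> max_norm n \<nu> * real eta * cmod (av n k \<psi> R)"
      unfolding norm_mult by (intro cbound[OF \<psi>] max_norm_ge)
  qed auto
  then show "cmod (braket n \<phi> (\<lambda>T S. \<Sum>j<n. \<Sum>k<n. \<Sum>m<n. \<tau> j k * \<nu> k m *
       fmult n (fmult n (creation n j) (number_op n m)) (annihilation n k) T S) \<psi>)
     \<le> spectral_norm n \<tau> * max_norm n \<nu> * (real eta)\<^sup>2"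
    unfolding eq by (simp add: power2_eq_square mult_ac)
qed

lemma item2:
  assumes "eta \<le> n"
  shows "eta_norm n eta (\<lambda>T S. \<Sum>j<n. \<Sum>k<n. \<tau> j k * \<nu> k k *
       fmult n (creation n j) (annihilation n k) T S)
     \<le> spectral_norm n \<tau> * max_norm n \<nu> * real eta"
proof (rule eta_norm_le[OF assms])
  fix \<phi> \<psi> assume \<phi>: "eta_state n eta \<phi>" and \<psi>: "eta_state n eta \<psi>"
  let ?P = "fock_basis n"
  have "braket n \<phi> (\<lambda>T S. \<Sum>j<n. \<Sum>k<n. \<tau> j k * \<nu> k k *
       fmult n (creation n j) (annihilation n k) T S) \<psi>
    = (\<Sum>j<n. \<Sum>k<n. \<tau> j k * \<nu> k k * (\<Sum>R\<in>?P. cnj (av n j \<phi> R) * av n k \<psi> R))"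
    by (simp only: braket_sum braket_scale braket_CA)
  also have "\<dots> = (\<Sum>R\<in>?P. \<Sum>j<n. \<Sum>k<n. \<tau> j k * \<nu> k k * (cnj (av n j \<phi> R) * av n k \<psi> R))"
    by (rule rearr3)
  also have "\<dots> = (\<Sum>R\<in>?P. \<Sum>j<n. \<Sum>k<n. cnj (av n j \<phi> R) * \<tau> j k * (\<nu> k k * av n k \<psi> R))"
    by (simp add: mult_ac)
  finally have eq: "braket n \<phi> (\<lambda>T S. \<Sum>j<n. \<Sum>k<n. \<tau> j k * \<nu> k k *
       fmult n (creation n j) (annihilation n k) T S) \<psi> = \<dots>" .
  have "cmod (\<Sum>R\<in>?P. \<Sum>j<n. \<Sum>k<n. cnj (av n j \<phi> R) * \<tau> j k * (\<nu> k k * av n k \<psi> R))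
     \<le> spectral_norm n \<tau> * 1 * max_norm n \<nu> * real eta"
  proof (rule finish[OF \<phi> \<psi>])
    show "0 \<le> max_norm n \<nu>" by (simp add: max_norm_nonneg)
    fix R k assume "R \<in> ?P" "k < n"
    then show "cmod (\<nu> k k * av n k \<psi> R) \<le> max_norm n \<nu> * cmod (av n k \<psi> R)"
      unfolding norm_mult by (intro mult_right_mono max_norm_ge) auto
  qed auto
  then show "cmod (braket n \<phi> (\<lambda>T S. \<Sum>j<n. \<Sum>k<n. \<tau> j k * \<nu> k k *
       fmult n (creation n j) (annihilation n k) T S) \<psi>)
     \<le> spectral_norm n \<tau> * max_norm n \<nu> * real eta"
    unfolding eq by simp
qed

lemma item3:
  assumes "eta \<le> n"
  shows "eta_norm n eta (\<lambda>T S. \<Sum>j<n. \<Sum>k<n. \<Sum>l<n. \<tau> j k * \<nu> l k *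
       fmult n (fmult n (creation n j) (number_op n l)) (annihilation n k) T S)
     \<le> spectral_norm n \<tau> * max_norm n \<nu> * (real eta)\<^sup>2"
proof (rule eta_norm_le[OF assms])
  fix \<phi> \<psi> assume \<phi>: "eta_state n eta \<phi>" and \<psi>: "eta_state n eta \<psi>"
  let ?P = "fock_basis n"
  have "braket n \<phi> (\<lambda>T S. \<Sum>j<n. \<Sum>k<n. \<Sum>l<n. \<tau> j k * \<nu> l k *
       fmult n (fmult n (creation n j) (number_op n l)) (annihilation n k) T S) \<psi>
    = (\<Sum>j<n. \<Sum>k<n. \<Sum>m<n. \<tau> j k * \<nu> m k * (\<Sum>R\<in>?P. cnj (av n j \<phi> R) * ind R m * av n k \<psi> R))"
    by (simp only: braket_sum braket_scale braket_CNA)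
  also have "\<dots> = (\<Sum>R\<in>?P. \<Sum>j<n. \<Sum>k<n. \<Sum>m<n. \<tau> j k * \<nu> m k * (cnj (av n j \<phi> R) * ind R m * av n k \<psi> R))"
    by (rule rearr4)
  also have "\<dots> = (\<Sum>R\<in>?P. \<Sum>j<n. \<Sum>k<n. cnj (av n j \<phi> R) * \<tau> j k * ((\<Sum>m<n. \<nu> m k * ind R m) * av n k \<psi> R))"
    by (simp add: sum_distrib_left sum_distrib_right mult_ac)
  finally have eq: "braket n \<phi> (\<lambda>T S. \<Sum>j<n. \<Sum>k<n. \<Sum>l<n. \<tau> j k * \<nu> l k *
       fmult n (fmult n (creation n j) (number_op n l)) (annihilation n k) T S) \<psi> = \<dots>" .
  have "cmod (\<Sum>R\<in>?P. \<Sum>j<n. \<Sum>k<n. cnj (av n j \<phi> R) * \<tau> j k * ((\<Sum>m<n. \<nu> m k * ind R m) * av n k \<psi> R))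
     \<le> spectral_norm n \<tau> * 1 * (max_norm n \<nu> * real eta) * real eta"
  proof (rule finish[OF \<phi> \<psi>])
    show "0 \<le> max_norm n \<nu> * real eta" by (simp add: max_norm_nonneg)
    fix R k assume "R \<in> ?P" "k < n"
    then show "cmod ((\<Sum>m<n. \<nu> m k * ind R m) * av n k \<psi> R) \<le> max_norm n \<nu> * real eta * cmod (av n k \<psi> R)"
      unfolding norm_mult by (intro cbound[OF \<psi>] max_norm_ge)
  qed auto
  then show "cmod (braket n \<phi> (\<lambda>T S. \<Sum>j<n. \<Sum>k<n. \<Sum>l<n. \<tau> j k * \<nu> l k *
       fmult n (fmult n (creation n j) (number_op n l)) (annihilation n k) T S) \<psi>)
     \<le> spectral_norm n \<tau> * max_norm n \<nu> * (real eta)\<^sup>2"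
    unfolding eq by (simp add: power2_eq_square mult_ac)
qed

lemma item4:
  assumes "eta \<le> n"
  shows "eta_norm n eta (\<lambda>T S. \<Sum>j<n. \<Sum>k<n. \<Sum>m<n. \<tau> j k * \<nu> j m *
       fmult n (fmult n (creation n j) (number_op n m)) (annihilation n k) T S)
     \<le> spectral_norm n \<tau> * max_norm n \<nu> * (real eta)\<^sup>2"
proof (rule eta_norm_le[OF assms])
  fix \<phi> \<psi> assume \<phi>: "eta_state n eta \<phi>" and \<psi>: "eta_state n eta \<psi>"
  let ?P = "fock_basis n"
  have "braket n \<phi> (\<lambda>T S. \<Sum>j<n. \<Sum>k<n. \<Sum>m<n. \<tau> j k * \<nu> j m *
       fmult n (fmult n (creation n j) (number_op n m)) (annihilation n k) T S) \<psi>
    = (\<Sum>j<n. \<Sum>k<n. \<Sum>m<n. \<tau> j k * \<nu> j m * (\<Sum>R\<in>?P. cnj (av n j \<phi> R) * ind R m * av n k \<psi> R))"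
    by (simp only: braket_sum braket_scale braket_CNA)
  also have "\<dots> = (\<Sum>R\<in>?P. \<Sum>j<n. \<Sum>k<n. \<Sum>m<n. \<tau> j k * \<nu> j m * (cnj (av n j \<phi> R) * ind R m * av n k \<psi> R))"
    by (rule rearr4)
  also have "\<dots> = (\<Sum>R\<in>?P. \<Sum>j<n. \<Sum>k<n. cnj (cnj (\<Sum>m<n. \<nu> j m * ind R m) * av n j \<phi> R) * \<tau> j k * av n k \<psi> R)"
    by (simp add: sum_distrib_left sum_distrib_right mult_ac)
  finally have eq: "braket n \<phi> (\<lambda>T S. \<Sum>j<n. \<Sum>k<n. \<Sum>m<n. \<tau> j k * \<nu> j m *
       fmult n (fmult n (creation n j) (number_op n m)) (annihilation n k) T S) \<psi> = \<dots>" .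
  have "cmod (\<Sum>R\<in>?P. \<Sum>j<n. \<Sum>k<n. cnj (cnj (\<Sum>m<n. \<nu> j m * ind R m) * av n j \<phi> R) * \<tau> j k * av n k \<psi> R)
     \<le> spectral_norm n \<tau> * (max_norm n \<nu> * real eta) * 1 * real eta"
  proof (rule finish[OF \<phi> \<psi>])
    show "0 \<le> max_norm n \<nu> * real eta" by (simp add: max_norm_nonneg)
    fix R j assume "R \<in> ?P" "j < n"
    then show "cmod (cnj (\<Sum>m<n. \<nu> j m * ind R m) * av n j \<phi> R) \<le> max_norm n \<nu> * real eta * cmod (av n j \<phi> R)"
      unfolding norm_mult complex_mod_cnj by (intro cbound[OF \<phi>] max_norm_ge)
  qed auto
  then show "cmod (braket n \<phi> (\<lambda>T S. \<Sum>j<n. \<Sum>k<n. \<Sum>m<n. \<tau> j k * \<nu> j m *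
       fmult n (fmult n (creation n j) (number_op n m)) (annihilation n k) T S) \<psi>)
     \<le> spectral_norm n \<tau> * max_norm n \<nu> * (real eta)\<^sup>2"
    unfolding eq by (simp add: power2_eq_square mult_ac)
qed

lemma item5:
  assumes "eta \<le> n"
  shows "eta_norm n eta (\<lambda>T S. \<Sum>j<n. \<Sum>k<n. \<tau> j k * \<nu> j j *
       fmult n (creation n j) (annihilation n k) T S)
     \<le> spectral_norm n \<tau> * max_norm n \<nu> * real eta"
proof (rule eta_norm_le[OF assms])
  fix \<phi> \<psi> assume \<phi>: "eta_state n eta \<phi>" and \<psi>: "eta_state n eta \<psi>"
  let ?P = "fock_basis n"
  have "braket n \<phi> (\<lambda>T S. \<Sum>j<n. \<Sum>k<n. \<tau> j k * \<nu> j j *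
       fmult n (creation n j) (annihilation n k) T S) \<psi>
    = (\<Sum>j<n. \<Sum>k<n. \<tau> j k * \<nu> j j * (\<Sum>R\<in>?P. cnj (av n j \<phi> R) * av n k \<psi> R))"
    by (simp only: braket_sum braket_scale braket_CA)
  also have "\<dots> = (\<Sum>R\<in>?P. \<Sum>j<n. \<Sum>k<n. \<tau> j k * \<nu> j j * (cnj (av n j \<phi> R) * av n k \<psi> R))"
    by (rule rearr3)
  also have "\<dots> = (\<Sum>R\<in>?P. \<Sum>j<n. \<Sum>k<n. cnj (cnj (\<nu> j j) * av n j \<phi> R) * \<tau> j k * av n k \<psi> R)"
    by (simp add: mult_ac)
  finally have eq: "braket n \<phi> (\<lambda>T S. \<Sum>j<n. \<Sum>k<n. \<tau> j k * \<nu> j j *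
       fmult n (creation n j) (annihilation n k) T S) \<psi> = \<dots>" .
  have "cmod (\<Sum>R\<in>?P. \<Sum>j<n. \<Sum>k<n. cnj (cnj (\<nu> j j) * av n j \<phi> R) * \<tau> j k * av n k \<psi> R)
     \<le> spectral_norm n \<tau> * max_norm n \<nu> * 1 * real eta"
  proof (rule finish[OF \<phi> \<psi>])
    show "0 \<le> max_norm n \<nu>" by (simp add: max_norm_nonneg)
    fix R j assume "R \<in> ?P" "j < n"
    then show "cmod (cnj (\<nu> j j) * av n j \<phi> R) \<le> max_norm n \<nu> * cmod (av n j \<phi> R)"
      unfolding norm_mult complex_mod_cnj by (intro mult_right_mono max_norm_ge) auto
  qed auto
  then show "cmod (braket n \<phi> (\<lambda>T S. \<Sum>j<n. \<Sum>k<n. \<tau> j k * \<nu> j j *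
       fmult n (creation n j) (annihilation n k) T S) \<psi>)
     \<le> spectral_norm n \<tau> * max_norm n \<nu> * real eta"
    unfolding eq by simp
qed

lemma item6:
  assumes "eta \<le> n"
  shows "eta_norm n eta (\<lambda>T S. \<Sum>j<n. \<Sum>k<n. \<Sum>l<n. \<tau> j k * \<nu> l j *
       fmult n (fmult n (creation n j) (number_op n l)) (annihilation n k) T S)
     \<le> spectral_norm n \<tau> * max_norm n \<nu> * (real eta)\<^sup>2"
proof (rule eta_norm_le[OF assms])
  fix \<phi> \<psi> assume \<phi>: "eta_state n eta \<phi>" and \<psi>: "eta_state n eta \<psi>"
  let ?P = "fock_basis n"
  have "braket n \<phi> (\<lambda>T S. \<Sum>j<n. \<Sum>k<n. \<Sum>l<n. \<tau> j k * \<nu> l j *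
       fmult n (fmult n (creation n j) (number_op n l)) (annihilation n k) T S) \<psi>
    = (\<Sum>j<n. \<Sum>k<n. \<Sum>m<n. \<tau> j k * \<nu> m j * (\<Sum>R\<in>?P. cnj (av n j \<phi> R) * ind R m * av n k \<psi> R))"
    by (simp only: braket_sum braket_scale braket_CNA)
  also have "\<dots> = (\<Sum>R\<in>?P. \<Sum>j<n. \<Sum>k<n. \<Sum>m<n. \<tau> j k * \<nu> m j * (cnj (av n j \<phi> R) * ind R m * av n k \<psi> R))"
    by (rule rearr4)
  also have "\<dots> = (\<Sum>R\<in>?P. \<Sum>j<n. \<Sum>k<n. cnj (cnj (\<Sum>m<n. \<nu> m j * ind R m) * av n j \<phi> R) * \<tau> j k * av n k \<psi> R)"
    by (simp add: sum_distrib_left sum_distrib_right mult_ac)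
  finally have eq: "braket n \<phi> (\<lambda>T S. \<Sum>j<n. \<Sum>k<n. \<Sum>l<n. \<tau> j k * \<nu> l j *
       fmult n (fmult n (creation n j) (number_op n l)) (annihilation n k) T S) \<psi> = \<dots>" .
  have "cmod (\<Sum>R\<in>?P. \<Sum>j<n. \<Sum>k<n. cnj (cnj (\<Sum>m<n. \<nu> m j * ind R m) * av n j \<phi> R) * \<tau> j k * av n k \<psi> R)
     \<le> spectral_norm n \<tau> * (max_norm n \<nu> * real eta) * 1 * real eta"
  proof (rule finish[OF \<phi> \<psi>])
    show "0 \<le> max_norm n \<nu> * real eta" by (simp add: max_norm_nonneg)
    fix R j assume "R \<in> ?P" "j < n"
    then show "cmod (cnj (\<Sum>m<n. \<nu> m j * ind R m) * av n j \<phi> R) \<le> max_norm n \<nu> * real eta * cmod (av n j \<phi> R)"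
      unfolding norm_mult complex_mod_cnj by (intro cbound[OF \<phi>] max_norm_ge)
  qed auto
  then show "cmod (braket n \<phi> (\<lambda>T S. \<Sum>j<n. \<Sum>k<n. \<Sum>l<n. \<tau> j k * \<nu> l j *
       fmult n (fmult n (creation n j) (number_op n l)) (annihilation n k) T S) \<psi>)
     \<le> spectral_norm n \<tau> * max_norm n \<nu> * (real eta)\<^sup>2"
    unfolding eq by (simp add: power2_eq_square mult_ac)
qed


theorem proposition8:
  fixes n eta :: nat and \<tau> \<nu> :: "nat \<Rightarrow> nat \<Rightarrow> complex"
  assumes "eta \<le> n"
  shows
  "(eta_norm n eta (\<lambda>T S. \<Sum>j<n. \<Sum>k<n. \<Sum>m<n. \<tau> j k * \<nu> k m *
       fmult n (fmult n (creation n j) (number_op n m)) (annihilation n k) T S)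
     \<le> spectral_norm n \<tau> * max_norm n \<nu> * (real eta)\<^sup>2)
   \<and> (eta_norm n eta (\<lambda>T S. \<Sum>j<n. \<Sum>k<n. \<tau> j k * \<nu> k k *
       fmult n (creation n j) (annihilation n k) T S)
     \<le> spectral_norm n \<tau> * max_norm n \<nu> * real eta)
   \<and> (eta_norm n eta (\<lambda>T S. \<Sum>j<n. \<Sum>k<n. \<Sum>l<n. \<tau> j k * \<nu> l k *
       fmult n (fmult n (creation n j) (number_op n l)) (annihilation n k) T S)
     \<le> spectral_norm n \<tau> * max_norm n \<nu> * (real eta)\<^sup>2)
   \<and> (eta_norm n eta (\<lambda>T S. \<Sum>j<n. \<Sum>k<n. \<Sum>m<n. \<tau> j k * \<nu> j m *
       fmult n (fmult n (creation n j) (number_op n m)) (annihilation n k) T S)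
     \<le> spectral_norm n \<tau> * max_norm n \<nu> * (real eta)\<^sup>2)
   \<and> (eta_norm n eta (\<lambda>T S. \<Sum>j<n. \<Sum>k<n. \<tau> j k * \<nu> j j *
       fmult n (creation n j) (annihilation n k) T S)
     \<le> spectral_norm n \<tau> * max_norm n \<nu> * real eta)
   \<and> (eta_norm n eta (\<lambda>T S. \<Sum>j<n. \<Sum>k<n. \<Sum>l<n. \<tau> j k * \<nu> l j *
       fmult n (fmult n (creation n j) (number_op n l)) (annihilation n k) T S)
     \<le> spectral_norm n \<tau> * max_norm n \<nu> * (real eta)\<^sup>2)"
    using item1[OF assms] item2[OF assms] item3[OF assms] item4[OF assms] item5[OF assms] item6[OF assms]
  by blast

end
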